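(* Let $(\mathbb X,d,\delta)$ be a nondegenerate dilation structure and let $x\in\mathbb X$. Then the function $d^x$ is a quasimetric on $B^d(x,R)$ with the same constants $c_{\mathbb X}$ and $Q_{\mathbb X}$ (in the generalized symmetry property and the generalized triangle inequality) as the quasimetric $d$.
   Context: A quasimetric space $(\mathbb X,d)$ is a topological space $\mathbb X$ with a map $d:\mathbb X\times\mathbb X\to[0,\infty)$ such that: (i) $d(u,v)=0$ iff $u=v$; (ii) $d(u,v)\le c_{\mathbb X}\,d(v,u)$ for a constant $1\le c_{\mathbb X}<\infty$ (generalized symmetry); (iii) $d(u,v)\le Q_{\mathbb X}(d(u,w)+d(w,v))$ for a constant $1\le Q_{\mathbb X}<\infty$ (generalized triangle inequality); (iv) $d(u,v)$ is upper semicontinuous in the first argument. The topology of $\mathbb X$ is assumed to coincide with the topology induced by $d$. Write $B^d(x,r)=\{y: d(y,x)<r\}$ and $\bar B^d(x,r)$ for its closure; $\mathbb X$ is boundedly compact if closed bounded sets are compact. A dilation structure $(\mathbb X,d,\delta)$ is a complete boundedly compact quasimetric space $(\mathbb X,d)$ with $d$ continuous in both arguments, satisfying: (A0) For every $x\in\mathbb X$ and $\varepsilon\in(0,1]$ there are a neighborhood $U(x)$ of $x$ and homeomorphisms (dilations) $\delta^x_\varepsilon:U(x)\to V_\varepsilon(x)$ and $\delta^x_{\varepsilon^{-1}}:W_{\varepsilon^{-1}}(x)\to U(x)$ with $V_\varepsilon(x)\subseteq W_{\varepsilon^{-1}}(x)\subseteq U(x)$; the family $\{\delta^x_\varepsilon\}_{\varepsilon\in(0,1]}$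 is continuous in $\varepsilon$; there is $R>0$ with $\bar B^d(x,R)\subseteq U(x)$ for all $x$, and for all $\varepsilon<1$ and $\tilde r>0$ with $\bar B^d(x,\tilde r)\subseteq U(x)$ one has $B^d(x,\tilde r\varepsilon)\subseteq\delta^x_\varepsilon B^d(x,\tilde r)\subset B^d(x,\tilde r)$. (A1) For all $x$ and $y\in U(x)$: $\delta^x_\varepsilon x=x$, $\delta^x_1=\mathrm{id}$, $\lim_{\varepsilon\to0}\delta^x_\varepsilon y=x$. (A2) $\delta^x_\varepsilon\delta^x_\mu u=\delta^x_{\varepsilon\mu}u$ for $u\in U(x)$ whenever both sides are defined. (A3) For every $x$, the limit $d^x(u,v)=\lim_{\varepsilon\to0}\frac1\varepsilon d(\delta^x_\varepsilon u,\delta^x_\varepsilon v)$ exists uniformly in $u,v\in\bar B^d(x,R)$. The dilation structure is nondegenerate if $d^x(u,v)=0$ implies $u=v$. *)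

theory Defs
  imports "HOL-Analysis.Analysis"
begin

definition qball :: "('a \<Rightarrow> 'a \<Rightarrow> real) \<Rightarrow> 'a \<Rightarrow> real \<Rightarrow> 'a set" where
  "qball d x r = {y. d y x < r}"

definition usc_on :: "'a::topological_space set \<Rightarrow> ('a \<Rightarrow> real) \<Rightarrow> bool" where
  "usc_on S f \<longleftrightarrow> (\<forall>y\<in>S. \<forall>e>0. eventually (\<lambda>z. f z < f y + e) (at y within S))"

definition quasimetric_on ::
  "'a::topological_space set \<Rightarrow> ('a \<Rightarrow> 'a \<Rightarrow> real) \<Rightarrow> real \<Rightarrow> real \<Rightarrow> bool" where
  "quasimetric_on S d c Q \<longleftrightarrow>
     1 \<le> c \<and> 1 \<le> Q \<and>
     (\<forall>u\<in>S. \<forall>v\<in>S. 0 \<le> d u v) \<and>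
     (\<forall>u\<in>S. \<forall>v\<in>S. d u v = 0 \<longleftrightarrow> u = v) \<and>
     (\<forall>u\<in>S. \<forall>v\<in>S. d u v \<le> c * d v u) \<and>
     (\<forall>u\<in>S. \<forall>v\<in>S. \<forall>w\<in>S. d u v \<le> Q * (d u w + d w v)) \<and>
     (\<forall>v\<in>S. usc_on S (\<lambda>u. d u v))"

definition quasimetric_space :: "('a::topological_space \<Rightarrow> 'a \<Rightarrow> real) \<Rightarrow> real \<Rightarrow> real \<Rightarrow> bool" where
  "quasimetric_space d c Q \<longleftrightarrow> quasimetric_on UNIV d c Q \<and>
     (\<forall>S. open S \<longleftrightarrow> (\<forall>y\<in>S. \<exists>r>0. qball d y r \<subseteq> S))"

definition q_cauchy :: "('a \<Rightarrow> 'a \<Rightarrow> real) \<Rightarrow> (nat \<Rightarrow> 'a) \<Rightarrow> bool" where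
  "q_cauchy d s \<longleftrightarrow> (\<forall>e>0. \<exists>N. \<forall>m\<ge>N. \<forall>n\<ge>N. d (s m) (s n) < e)"

definition q_complete :: "('a::topological_space \<Rightarrow> 'a \<Rightarrow> real) \<Rightarrow> bool" where
  "q_complete d \<longleftrightarrow> (\<forall>s. q_cauchy d s \<longrightarrow> (\<exists>y. s \<longlonglongrightarrow> y))"

definition q_bounded :: "('a \<Rightarrow> 'a \<Rightarrow> real) \<Rightarrow> 'a set \<Rightarrow> bool" where
  "q_bounded d S \<longleftrightarrow> (\<exists>x r. S \<subseteq> qball d x r)"

definition boundedly_compact :: "('a::topological_space \<Rightarrow> 'a \<Rightarrow> real) \<Rightarrow> bool" where
  "boundedly_compact d \<longleftrightarrow> (\<forall>S. closed S \<and> q_bounded d S \<longrightarrow> compact S)"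

text \<open>Domain of the dilation \<delta> x e: U x for e in (0,1], and W x (1/e) (the set
  W_{e}(x) of the paper, indexed here by 1/e) for e > 1.\<close>
definition dil_dom :: "('a \<Rightarrow> 'a set) \<Rightarrow> ('a \<Rightarrow> real \<Rightarrow> 'a set) \<Rightarrow> 'a \<Rightarrow> real \<Rightarrow> 'a set" where
  "dil_dom U W x e = (if 0 < e \<and> e \<le> 1 then U x else if 1 < e then W x (1 / e) else {})"

text \<open>Dilation structure (A0)-(A3).  U x is U(x); V x e is V_e(x); W x e is
  W_{1/e}(x) for e in (0,1]; \<delta> x e is the dilation \<delta>^x_e.\<close>
definition dilation_structure ::
  "('a::topological_space \<Rightarrow> 'a \<Rightarrow> real) \<Rightarrow> real \<Rightarrow> real \<Rightarrow> ('a \<Rightarrow> 'a set) \<Rightarrow>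
   ('a \<Rightarrow> real \<Rightarrow> 'a set) \<Rightarrow> ('a \<Rightarrow> real \<Rightarrow> 'a set) \<Rightarrow> ('a \<Rightarrow> real \<Rightarrow> 'a \<Rightarrow> 'a) \<Rightarrow> real \<Rightarrow> bool"
  where
  "dilation_structure d c Q U V W \<delta> R \<longleftrightarrow>
     quasimetric_space d c Q \<and> q_complete d \<and> boundedly_compact d \<and>
     continuous_on UNIV (\<lambda>p. d (fst p) (snd p)) \<and>
     \<comment> \<open>(A0)\<close>
     0 < R \<and>
     (\<forall>x. x \<in> interior (U x) \<and>
        (\<forall>e. 0 < e \<and> e \<le> 1 \<longrightarrow>
           (\<exists>g. homeomorphism (U x) (V x e) (\<delta> x e) g) \<and>
           (\<exists>g. homeomorphism (W x e) (U x) (\<delta> x (1 / e)) g) \<and>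
           V x e \<subseteq> W x e \<and> W x e \<subseteq> U x) \<and>
        (\<forall>y\<in>U x. continuous_on {0<..1} (\<lambda>e. \<delta> x e y)) \<and>
        closure (qball d x R) \<subseteq> U x \<and>
        (\<forall>e r. 0 < e \<and> e < 1 \<and> 0 < r \<and> closure (qball d x r) \<subseteq> U x \<longrightarrow>
           qball d x (r * e) \<subseteq> \<delta> x e ` qball d x r \<and>
           \<delta> x e ` qball d x r \<subseteq> qball d x r)) \<and>
     \<comment> \<open>(A1)\<close>
     (\<forall>x. (\<forall>e. 0 < e \<and> e \<le> 1 \<longrightarrow> \<delta> x e x = x) \<and>
          (\<forall>y\<in>U x. \<delta> x 1 y = y \<and> ((\<lambda>e. \<delta> x e y) \<longlongrightarrow> x) (at_right 0))) \<and>
     \<comment> \<open>(A2)\<close>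
     (\<forall>x e m u. u \<in> dil_dom U W x m \<and> \<delta> x m u \<in> dil_dom U W x e \<and>
          u \<in> dil_dom U W x (e * m) \<longrightarrow> \<delta> x e (\<delta> x m u) = \<delta> x (e * m) u) \<and>
     \<comment> \<open>(A3)\<close>
     (\<forall>x. \<exists>l. uniform_limit (closure (qball d x R) \<times> closure (qball d x R))
           (\<lambda>e p. d (\<delta> x e (fst p)) (\<delta> x e (snd p)) / e) l (at_right 0))"

definition dlim :: "('a \<Rightarrow> 'a \<Rightarrow> real) \<Rightarrow> ('a \<Rightarrow> real \<Rightarrow> 'a \<Rightarrow> 'a) \<Rightarrow> 'a \<Rightarrow> 'a \<Rightarrow> 'a \<Rightarrow> real" where
  "dlim d \<delta> x u v = Lim (at_right 0) (\<lambda>e. d (\<delta> x e u) (\<delta> x e v) / e)"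

definition nondegenerate ::
  "('a::topological_space \<Rightarrow> 'a \<Rightarrow> real) \<Rightarrow> ('a \<Rightarrow> real \<Rightarrow> 'a \<Rightarrow> 'a) \<Rightarrow> real \<Rightarrow> bool" where
  "nondegenerate d \<delta> R \<longleftrightarrow>
     (\<forall>x. \<forall>u\<in>closure (qball d x R). \<forall>v\<in>closure (qball d x R). dlim d \<delta> x u v = 0 \<longrightarrow> u = v)"

end

theory Submission
  imports Defs
begin

theorem proposition1:
  fixes d :: "'a::topological_space \<Rightarrow> 'a \<Rightarrow> real"
  assumes "dilation_structure d c Q U V W \<delta> R"
    and "nondegenerate d \<delta> R"
  shows "quasimetric_on (qball d x R) (dlim d \<delta> x) c Q"
proof -
  define S where "S = qball d x R"
  define C where "C = closure S"
  define f where "f = (\<lambda>e p. d (\<delta> x e (fst p)) (\<delta> x e (snd p)) / e)"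
  have SC: "S \<subseteq> C" unfolding C_def by (rule closure_subset)
  have qs: "quasimetric_space d c Q" using assms(1) unfolding dilation_structure_def by (elim conjE) blast
  hence qo: "quasimetric_on UNIV d c Q" unfolding quasimetric_space_def by blast
  have c1: "1 \<le> c" and Q1: "1 \<le> Q" using qo unfolding quasimetric_on_def by auto
  have d0: "\<And>u v. d u v = 0 \<longleftrightarrow> u = v" using qo unfolding quasimetric_on_def by auto
  have dnn: "\<And>u v. 0 \<le> d u v" using qo unfolding quasimetric_on_def by auto
  have dsym: "\<And>u v. d u v \<le> c * d v u" using qo unfolding quasimetric_on_def by auto
  have dtri: "\<And>u v w. d u v \<le> Q * (d u w + d w v)" using qo unfolding quasimetric_on_def by auto
  have dcont: "continuous_on UNIV (\<lambda>p. d (fst p) (snd p))"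
    using assms(1) unfolding dilation_structure_def by (elim conjE) blast
  have CU: "C \<subseteq> U x" using assms(1) unfolding dilation_structure_def C_def S_def by (elim conjE) blast
  have hom: "\<And>e. 0 < e \<Longrightarrow> e \<le> 1 \<Longrightarrow> \<exists>g. homeomorphism (U x) (V x e) (\<delta> x e) g"
    using assms(1) unfolding dilation_structure_def by (elim conjE) blast
  have A3: "\<forall>x. \<exists>l. uniform_limit (closure (qball d x R) \<times> closure (qball d x R))
           (\<lambda>e p. d (\<delta> x e (fst p)) (\<delta> x e (snd p)) / e) l (at_right 0)"
    using assms(1) unfolding dilation_structure_def by (elim conjE) assumption
  obtain l where ul: "uniform_limit (C \<times> C) f l (at_right 0)"
    using A3 unfolding C_def S_def f_def by blast
  have tl: "\<And>u v. u \<in> C \<Longrightarrow> v \<in> C \<Longrightarrow> ((\<lambda>e. f e (u, v)) \<longlongrightarrow> l (u, v)) (at_right 0)"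
    using tendsto_uniform_limitI[OF ul] by blast
  have dl: "\<And>u v. u \<in> C \<Longrightarrow> v \<in> C \<Longrightarrow> dlim d \<delta> x u v = l (u, v)"
    unfolding dlim_def using tl[THEN tendsto_Lim[rotated]] by (simp add: f_def)
  have ev: "\<And>P. (\<And>e. 0 < e \<Longrightarrow> e < 1 \<Longrightarrow> P e) \<Longrightarrow> eventually P (at_right (0::real))"
    unfolding eventually_at_right_field by (rule exI[of _ 1]) auto
  have F: "\<not> trivial_limit (at_right (0::real))" by simp
  have nn: "\<And>u v. u \<in> C \<Longrightarrow> v \<in> C \<Longrightarrow> 0 \<le> l (u, v)"
    by (rule tendsto_lowerbound[OF tl _ F], assumption+, rule ev, simp add: f_def dnn)
  have sym: "\<And>u v. u \<in> C \<Longrightarrow> v \<in> C \<Longrightarrow> l (u, v) \<le> c * l (v, u)"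
  proof -
    fix u v assume u: "u \<in> C" and v: "v \<in> C"
    show "l (u, v) \<le> c * l (v, u)"
      apply (rule tendsto_le[OF F tendsto_mult[OF tendsto_const tl[OF v u]] tl[OF u v]])
      apply (rule ev) by (simp add: f_def divide_right_mono dsym)
  qed
  have tri: "\<And>u v w. u \<in> C \<Longrightarrow> v \<in> C \<Longrightarrow> w \<in> C \<Longrightarrow> l (u, v) \<le> Q * (l (u, w) + l (w, v))"
  proof -
    fix u v w assume u: "u \<in> C" and v: "v \<in> C" and w: "w \<in> C"
    show "l (u, v) \<le> Q * (l (u, w) + l (w, v))"
      apply (rule tendsto_le[OF F tendsto_mult[OF tendsto_const tendsto_add[OF tl[OF u w] tl[OF w v]]] tl[OF u v]])
      apply (rule ev)
    proof -
      fix e :: real assume e: "0 < e" "e < 1"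
      have "d (\<delta> x e u) (\<delta> x e v) / e \<le> Q * (d (\<delta> x e u) (\<delta> x e w) + d (\<delta> x e w) (\<delta> x e v)) / e"
        using dtri e by (simp add: divide_right_mono)
      thus "f e (u, v) \<le> Q * (f e (u, w) + f e (w, v))"
        by (simp add: f_def add_divide_distrib[symmetric] times_divide_eq_right[symmetric] del: times_divide_eq_right)
    qed
  qed
  have zero: "\<And>u v. u \<in> C \<Longrightarrow> v \<in> C \<Longrightarrow> l (u, v) = 0 \<longleftrightarrow> u = v"
  proof -
    fix u v assume u: "u \<in> C" and v: "v \<in> C"
    show "l (u, v) = 0 \<longleftrightarrow> u = v"
    proof
      assume "l (u, v) = 0"
      thus "u = v" using assms(2) u v dl unfolding nondegenerate_def C_def S_def by auto
    next
      assume "u = v"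
      have "((\<lambda>e. f e (u, u)) \<longlongrightarrow> 0) (at_right 0)"
      proof -
        have "\<And>e. d (\<delta> x e u) (\<delta> x e u) / e = 0" using d0 by simp
        hence "(\<lambda>e. f e (u, u)) = (\<lambda>e. 0)" unfolding f_def by (intro ext) simp
        thus ?thesis by (simp only:) (rule tendsto_const)
      qed
      thus "l (u, v) = 0" using tendsto_unique[OF F tl[OF u u]] \<open>u = v\<close> by blast
    qed
  qed
  have contf: "\<And>e. 0 < e \<Longrightarrow> e < 1 \<Longrightarrow> continuous_on (C \<times> C) (f e)"
  proof -
    fix e :: real assume e: "0 < e" "e < 1"
    obtain g where "homeomorphism (U x) (V x e) (\<delta> x e) g" using hom[OF e(1) less_imp_le[OF e(2)]] by (elim exE)
    hence "continuous_on (U x) (\<delta> x e)" unfolding homeomorphism_def by (elim conjE)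
    hence cd: "continuous_on C (\<delta> x e)" using CU by (rule continuous_on_subset)
    have "continuous_on (C \<times> C) (\<lambda>p. (\<delta> x e (fst p), \<delta> x e (snd p)))"
      apply (intro continuous_on_Pair)
      apply (rule continuous_on_compose2[OF cd continuous_on_fst[OF continuous_on_id]]) apply (auto simp: subset_iff)[1]
      apply (rule continuous_on_compose2[OF cd continuous_on_snd[OF continuous_on_id]]) apply (auto simp: subset_iff)[1]
      done
    hence "continuous_on (C \<times> C) (\<lambda>p. d (\<delta> x e (fst p)) (\<delta> x e (snd p)))"
      using continuous_on_compose2[OF dcont] by fastforce
    thus "continuous_on (C \<times> C) (f e)" unfolding f_def
      by (intro continuous_on_divide continuous_on_const) (use e in auto)
  qed
  have cl: "continuous_on (C \<times> C) l"
    by (rule uniform_limit_theorem[OF ev[OF contf] ul F])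
  have usc: "\<And>v. v \<in> S \<Longrightarrow> usc_on S (\<lambda>u. dlim d \<delta> x u v)"
  proof -
    fix v assume v: "v \<in> S"
    have "continuous_on S (\<lambda>u. l (u, v))"
      apply (rule continuous_on_compose2[OF cl])
       apply (intro continuous_intros)
      using v SC by auto
    hence cs: "continuous_on S (\<lambda>u. dlim d \<delta> x u v)"
      apply (rule continuous_on_cong[THEN iffD1, rotated -1]) apply (rule refl)
      using v SC dl by (metis subsetD)
    show "usc_on S (\<lambda>u. dlim d \<delta> x u v)"
      unfolding usc_on_def
    proof (intro ballI allI impI)
      fix y :: 'a and e :: real assume y: "y \<in> S" and e: "0 < e"
      have "((\<lambda>u. dlim d \<delta> x u v) \<longlongrightarrow> dlim d \<delta> x y v) (at y within S)"
        using cs y continuous_on_def by blast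
      from order_tendstoD(2)[OF this, of "dlim d \<delta> x y v + e"] e
      show "\<forall>\<^sub>F z in at y within S. dlim d \<delta> x z v < dlim d \<delta> x y v + e" by simp
    qed
  qed
  show ?thesis
    unfolding quasimetric_on_def S_def[symmetric]
    using c1 Q1 usc nn sym tri zero dl SC by (auto simp: subset_iff)
qed

end
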